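(* Let $1\le k<n$ and $T\ge1$. Let $\mathcal{B}^n_{n-k}=\{w\in\mathbb{R}^n:\sum_iw_i=1,\ 0\le w_i\le\frac1{n-k}\}$. Run the following algorithm: start from $w_1\in\mathcal{B}^n_{n-k}$; at each $t$, write $w_t$ as a convex combination $\sum_jp_jr_j$ of corners $r_j$ of $\mathcal{B}^n_{n-k}$ (vectors with $n-k$ entries equal to $\frac1{n-k}$ and the rest $0$), sample $r=r_j$ with probability $p_j$, and select the subset $v_t=(n-k)r\in\{0,1\}^n$ of $n-k$ experts (so $\mathbb{E}[v_t]=(n-k)w_t$); then receive the loss vector $\ell_t\in[0,1]^n$ and update $$v'_{t+1,i}=\frac{w_{t,i}e^{-\eta\ell_{t,i}}}{\sum_jw_{t,j}e^{-\eta\ell_{t,j}}},\quad \hat w_{t+1,i}=\frac\alpha n+(1-\alpha)v'_{t+1,i},\quad w_{t+1}=\operatorname{argmin}_{w\in\mathcal{B}^n_{n-k}}d(w,\hat w_{t+1}),$$ where $d(q,w)=\sum_iq_i\ln(q_i/w_i)$. Suppose $L>0$ satisfies $\min_{q\in\mathcal{B}^n_{n-k}}\sum_{t=r}^s(n-k)q^\top\ell_t\le L$ for all $1\le r\le s\le T$, and set $\alpha=\frac1{T(n-k)+1}$, $D=(n-k)\ln(n(1+(n-k)T))+1$, $\eta=\ln(1+\sqrt{2D/L})$. Then $$\mathcal{R}_a^{\mathrm{subexp}}:=\max_{[r,s]\subset[1,T]}\Big\{\sum_{t=r}^s\mathbb{E}[v_t^\top\ell_t]-\min_{u\in\mathcal{S}_{\mathrm{vec}}}\sum_{t=r}^su^\top\ell_t\Big\}\le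 O(\sqrt{2LD}+D),$$ where $\mathcal{S}_{\mathrm{vec}}$ is the set of vectors in $\{0,1\}^n$ with exactly $n-k$ entries equal to $1$.
   Context: Here $\mathbb{E}[v_t^\top\ell_t]=(n-k)w_t^\top\ell_t$, and $\min_{u\in\mathcal{S}_{\mathrm{vec}}}\sum_t u^\top\ell_t=\min_{q\in\mathcal{B}^n_{n-k}}\sum_t(n-k)q^\top\ell_t$. $O(\cdot)$ hides an absolute constant. *)

theory Defs
  imports "HOL-Analysis.Analysis"
begin

text \<open>Vectors in R^n are functions nat => real, indices 0..n-1, zero outside.\<close>

definition capped_simplex :: "nat \<Rightarrow> nat \<Rightarrow> (nat \<Rightarrow> real) set" where
  "capped_simplex n m = {w. (\<Sum>i<n. w i) = 1 \<and> (\<forall>i<n. 0 \<le> w i \<and> w i \<le> 1 / real m)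
                              \<and> (\<forall>i\<ge>n. w i = 0)}"

definition subset_vecs :: "nat \<Rightarrow> nat \<Rightarrow> (nat \<Rightarrow> real) set" where
  "subset_vecs n m = {u. (\<forall>i<n. u i = 0 \<or> u i = 1) \<and> (\<forall>i\<ge>n. u i = 0)
                          \<and> card {i. i < n \<and> u i = 1} = m}"

definition dotn :: "nat \<Rightarrow> (nat \<Rightarrow> real) \<Rightarrow> (nat \<Rightarrow> real) \<Rightarrow> real" where
  "dotn n a b = (\<Sum>i<n. a i * b i)"

definition kl_div :: "nat \<Rightarrow> (nat \<Rightarrow> real) \<Rightarrow> (nat \<Rightarrow> real) \<Rightarrow> real" where
  "kl_div n q w = (\<Sum>i<n. q i * ln (q i / w i))"

definition mixed_update :: "nat \<Rightarrow> real \<Rightarrow> real \<Rightarrow> (nat \<Rightarrow> real) \<Rightarrow> (nat \<Rightarrow> real) \<Rightarrow> (nat \<Rightarrow> real)" where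
  "mixed_update n \<eta> \<alpha> w l = (\<lambda>i. \<alpha> / real n + (1 - \<alpha>) *
       (w i * exp (- \<eta> * l i) / (\<Sum>j<n. w j * exp (- \<eta> * l j))))"

definition is_run :: "nat \<Rightarrow> nat \<Rightarrow> nat \<Rightarrow> real \<Rightarrow> real \<Rightarrow> (nat \<Rightarrow> nat \<Rightarrow> real)
                      \<Rightarrow> (nat \<Rightarrow> nat \<Rightarrow> real) \<Rightarrow> bool" where
  "is_run n k T \<eta> \<alpha> l w \<longleftrightarrow>
     w 1 \<in> capped_simplex n (n - k) \<and>
     (\<forall>t. 1 \<le> t \<and> t < T \<longrightarrow>
        is_arg_min (\<lambda>q. kl_div n q (mixed_update n \<eta> \<alpha> (w t) (l t)))
                   (\<lambda>q. q \<in> capped_simplex n (n - k)) (w (t + 1)))"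

text \<open>Expected loss of the sampled subset v_t: E[v_t . l_t] = (n-k) w_t . l_t.\<close>
definition expected_loss :: "nat \<Rightarrow> nat \<Rightarrow> (nat \<Rightarrow> real) \<Rightarrow> (nat \<Rightarrow> real) \<Rightarrow> real" where
  "expected_loss n k w l = real (n - k) * dotn n w l"

definition interval_regret :: "nat \<Rightarrow> nat \<Rightarrow> (nat \<Rightarrow> nat \<Rightarrow> real) \<Rightarrow> (nat \<Rightarrow> nat \<Rightarrow> real)
                               \<Rightarrow> nat \<Rightarrow> nat \<Rightarrow> real" where
  "interval_regret n k l w r s =
     (\<Sum>t=r..s. expected_loss n k (w t) (l t))
     - Min ((\<lambda>u. \<Sum>t=r..s. dotn n u (l t)) ` subset_vecs n (n - k))"

end

theory Submission
  imports Defs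
begin

lemma xlnx_ge: fixes a b :: real assumes "0 < a" "0 \<le> b" shows "b - a \<le> b * ln (b / a)"
proof (cases "b = 0")
  case True then show ?thesis using assms by simp
next
  case False
  hence bp: "b > 0" using assms by simp
  have "ln (a / b) \<le> a / b - 1" using ln_le_minus_one assms bp by simp
  moreover have "ln (b / a) = - ln (a / b)" using assms bp by (simp add: ln_div)
  ultimately have "ln (b / a) \<ge> 1 - a / b" by simp
  hence "b * ln (b / a) \<ge> b * (1 - a / b)" using bp by (intro mult_left_mono) auto
  moreover have "b * (1 - a / b) = b - a" using bp by (simp add: field_simps)
  ultimately show ?thesis by linarith
qed

lemma conv_term: fixes a b w :: real assumes "0 < w" "0 < a" "0 \<le> b"
  shows "(b - a) * (ln (a / w) + 1) \<le> b * ln (b / w) - a * ln (a / w)"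
proof (cases "b = 0")
  case True then show ?thesis using assms by (simp add: algebra_simps)
next
  case False
  hence bp: "b > 0" using assms by simp
  have "ln (b / w) = ln (b / a) + ln (a / w)" using assms bp by (simp add: ln_div)
  hence "b * ln (b / w) - a * ln (a / w) - (b - a) * (ln (a / w) + 1) = b * ln (b / a) - (b - a)"
    by (simp add: algebra_simps)
  thus ?thesis using xlnx_ge[OF assms(2,3)] by linarith
qed

lemma kl_nonneg: assumes "\<forall>i<n. 0 \<le> q i" "\<forall>i<n. 0 < w i" "(\<Sum>i<n. q i) = (\<Sum>i<n. w i)"
  shows "0 \<le> kl_div n q w"
proof -
  have "(\<Sum>i<n. q i - w i) \<le> (\<Sum>i<n. q i * ln (q i / w i))"
    by (rule sum_mono) (use assms xlnx_ge in auto)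
  moreover have "(\<Sum>i<n. q i - w i) = 0" using assms(3) by (simp add: sum_subtractf)
  ultimately show ?thesis by (simp add: kl_div_def)
qed

lemma capped_convex: assumes "p \<in> capped_simplex n m" "u \<in> capped_simplex n m" "0 \<le> e" "e \<le> 1"
  shows "(\<lambda>i. p i + e * (u i - p i)) \<in> capped_simplex n m"
proof -
  have s: "(\<Sum>i<n. p i + e * (u i - p i)) = (\<Sum>i<n. p i) + e * ((\<Sum>i<n. u i) - (\<Sum>i<n. p i))"
  proof -
    have "(\<Sum>i<n. e * (u i - p i)) = e * (\<Sum>i<n. u i - p i)" by (simp add: sum_distrib_left)
    thus ?thesis by (simp add: sum.distrib sum_subtractf)
  qed
  have b: "0 \<le> p i + e * (u i - p i) \<and> p i + e * (u i - p i) \<le> 1 / real m" if "i < n" for i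
  proof -
    have h: "0 \<le> p i" "p i \<le> 1 / real m" "0 \<le> u i" "u i \<le> 1 / real m"
      using assms that unfolding capped_simplex_def by auto
    have "p i + e * (u i - p i) = (1 - e) * p i + e * u i" by (simp add: algebra_simps)
    moreover have "(1 - e) * p i + e * u i \<le> (1 - e) * (1 / real m) + e * (1 / real m)"
      using h assms(3,4) by (intro add_mono mult_left_mono) auto
    moreover have "0 \<le> (1 - e) * p i + e * u i" using h assms(3,4) by simp
    moreover have "(1 - e) * (1 / real m) + e * (1 / real m) = 1 / real m" by (simp add: add_divide_distrib[symmetric])
    ultimately show ?thesis by linarith
  qed
  show ?thesis using assms s b unfolding capped_simplex_def by auto
qed

lemma exp_lin: fixes x eta :: real assumes "0 \<le> x" "x \<le> 1" "0 \<le> eta"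
  shows "exp (- eta * x) \<le> 1 - (1 - exp (- eta)) * x"
proof -
  have "exp ((1 - x) * 0 + x * (- eta)) \<le> (1 - x) * exp 0 + x * exp (- eta)"
    using convex_onD[OF exp_convex, of x 0 "-eta"] assms by (simp add: algebra_simps)
  thus ?thesis by (simp add: algebra_simps)
qed

lemma var_ineq:
  assumes amin: "is_arg_min (\<lambda>q. kl_div n q wh) (\<lambda>q. q \<in> capped_simplex n m) p"
    and u: "u \<in> capped_simplex n m" and wh: "\<forall>i<n. 0 < wh i" and e: "0 < e" "e \<le> 1"
    and pos: "\<forall>i<n. 0 < p i + e * (u i - p i)"
  shows "0 \<le> (\<Sum>i<n. (u i - p i) * ln ((p i + e * (u i - p i)) / wh i))"
proof -
  define qe where "qe = (\<lambda>i. p i + e * (u i - p i))"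
  have pK: "p \<in> capped_simplex n m" using amin by (simp add: is_arg_min_def)
  have qK: "qe \<in> capped_simplex n m" unfolding qe_def using capped_convex[OF pK u] e by simp
  have le: "kl_div n p wh \<le> kl_div n qe wh" using amin qK by (auto simp: is_arg_min_def not_less)
  have p0: "\<forall>i<n. 0 \<le> p i" using pK by (simp add: capped_simplex_def)
  have "(\<Sum>i<n. (p i - qe i) * (ln (qe i / wh i) + 1)) \<le> (\<Sum>i<n. p i * ln (p i / wh i) - qe i * ln (qe i / wh i))"
  proof (rule sum_mono)
    fix i assume "i \<in> {..<n}"
    hence "0 < wh i" "0 < qe i" "0 \<le> p i" using wh pos p0 qe_def by auto
    thus "(p i - qe i) * (ln (qe i / wh i) + 1) \<le> p i * ln (p i / wh i) - qe i * ln (qe i / wh i)"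
      by (rule conv_term)
  qed
  also have "\<dots> = kl_div n p wh - kl_div n qe wh" by (simp add: kl_div_def sum_subtractf)
  finally have A: "(\<Sum>i<n. (p i - qe i) * (ln (qe i / wh i) + 1)) \<le> 0" using le by linarith
  have "(\<Sum>i<n. (p i - qe i) * (ln (qe i / wh i) + 1)) = - e * (\<Sum>i<n. (u i - p i) * (ln (qe i / wh i) + 1))"
    by (simp add: qe_def sum_distrib_left sum_negf[symmetric] mult.assoc)
  with A have "0 \<le> e * (\<Sum>i<n. (u i - p i) * (ln (qe i / wh i) + 1))" by linarith
  with e have B: "0 \<le> (\<Sum>i<n. (u i - p i) * (ln (qe i / wh i) + 1))"
    by (simp add: zero_le_mult_iff)
  have "(\<Sum>i<n. (u i - p i) * (ln (qe i / wh i) + 1)) = (\<Sum>i<n. (u i - p i) * ln (qe i / wh i)) + ((\<Sum>i<n. u i) - (\<Sum>i<n. p i))"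
    by (simp add: algebra_simps sum.distrib sum_subtractf)
  also have "(\<Sum>i<n. u i) = 1" using u by (simp add: capped_simplex_def)
  also have "(\<Sum>i<n. p i) = 1" using pK by (simp add: capped_simplex_def)
  finally show ?thesis using B by (simp add: qe_def)
qed

lemma proj_pos:
  assumes amin: "is_arg_min (\<lambda>q. kl_div n q wh) (\<lambda>q. q \<in> capped_simplex n m) p"
    and wh: "\<forall>i<n. 0 < wh i" and m: "1 \<le> m" "m \<le> n"
  shows "\<forall>i<n. 0 < p i"
proof (rule ccontr)
  assume "\<not> (\<forall>i<n. 0 < p i)"
  have pK: "p \<in> capped_simplex n m" using amin by (simp add: is_arg_min_def)
  have p0: "\<forall>i<n. 0 \<le> p i" using pK by (simp add: capped_simplex_def)
  define J where "J = {i. i < n \<and> p i = 0}"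
  define P where "P = {i. i < n \<and> p i \<noteq> 0}"
  have Jne: "J \<noteq> {}" using \<open>\<not> (\<forall>i<n. 0 < p i)\<close> p0 J_def by force
  have fin: "finite J" "finite P" unfolding J_def P_def by auto
  have un: "{..<n} = P \<union> J" "P \<inter> J = {}" unfolding J_def P_def by auto
  have npos: "0 < real n" using m by simp
  define u where "u = (\<lambda>i::nat. if i < n then 1 / real n else 0)"
  have uK: "u \<in> capped_simplex n m"
  proof -
    have "(\<Sum>i<n. u i) = 1" using npos by (simp add: u_def)
    moreover have "1 / real n \<le> 1 / real m" using m by (simp add: frac_le)
    ultimately show ?thesis unfolding capped_simplex_def u_def by auto
  qed
  define phi where "phi = (\<lambda>e. \<Sum>i<n. (u i - p i) * ln ((p i + e * (u i - p i)) / wh i))"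
  have ev1: "eventually (\<lambda>e. 0 \<le> phi e) (at_right 0)"
  proof -
    have "eventually (\<lambda>e::real. e \<in> {0<..<1}) (at_right 0)" by (rule eventually_at_right_real) simp
    thus ?thesis
    proof (rule eventually_mono)
      fix e :: real assume e: "e \<in> {0<..<1}"
      have "\<forall>i<n. 0 < p i + e * (u i - p i)"
      proof (intro allI impI)
        fix i assume i: "i < n"
        have "p i + e * (u i - p i) = (1 - e) * p i + e * (1 / real n)" using i by (simp add: u_def algebra_simps)
        moreover have "0 \<le> (1 - e) * p i" using e p0 i by simp
        moreover have "0 < e * (1 / real n)" using e npos by simp
        ultimately show "0 < p i + e * (u i - p i)" by linarith
      qed
      thus "0 \<le> phi e" unfolding phi_def using var_ineq[OF amin uK wh] e by auto
    qed
  qed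
  define c where "c = (\<Sum>i\<in>J. (1 / real n) * ln (real n * wh i))"
  define g where "g = (\<lambda>e. (\<Sum>i\<in>P. (u i - p i) * ln ((p i + e * (u i - p i)) / wh i)) - c)"
  define K where "K = real (card J) / real n"
  have Kpos: "0 < K" using Jne fin npos by (simp add: K_def card_gt_0_iff)
  have eq: "eventually (\<lambda>e. phi e = g e + K * ln e) (at_right 0)"
  proof -
    have "eventually (\<lambda>e::real. e \<in> {0<..<1}) (at_right 0)" by (rule eventually_at_right_real) simp
    thus ?thesis
    proof (rule eventually_mono)
      fix e :: real assume e: "e \<in> {0<..<1}"
      have "phi e = (\<Sum>i\<in>P. (u i - p i) * ln ((p i + e * (u i - p i)) / wh i))
                  + (\<Sum>i\<in>J. (u i - p i) * ln ((p i + e * (u i - p i)) / wh i))"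
        unfolding phi_def un(1) using fin(2) fin(1) un(2) by (rule sum.union_disjoint)
      also have "(\<Sum>i\<in>J. (u i - p i) * ln ((p i + e * (u i - p i)) / wh i))
                 = (\<Sum>i\<in>J. (1 / real n) * ln e - (1 / real n) * ln (real n * wh i))"
      proof (rule sum.cong)
        fix i assume "i \<in> J"
        hence i: "i < n" "p i = 0" unfolding J_def by auto
        have "(p i + e * (u i - p i)) / wh i = e / (real n * wh i)" using i by (simp add: u_def)
        moreover have "ln (e / (real n * wh i)) = ln e - ln (real n * wh i)"
          using e wh i npos by (intro ln_divide_pos) auto
        ultimately show "(u i - p i) * ln ((p i + e * (u i - p i)) / wh i) = (1 / real n) * ln e - (1 / real n) * ln (real n * wh i)"
          using i by (simp add: u_def right_diff_distrib)
      qed simp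
      also have "\<dots> = K * ln e - c" by (simp add: sum_subtractf c_def K_def)
      finally show "phi e = g e + K * ln e" by (simp add: g_def)
    qed
  qed
  have glim: "(g \<longlongrightarrow> g 0) (at_right 0)"
    unfolding g_def
  proof (intro tendsto_intros)
    fix i assume "i \<in> P"
    hence "p i \<noteq> 0" "wh i \<noteq> 0" using wh unfolding P_def by auto
    thus "(p i + 0 * (u i - p i)) / wh i \<noteq> 0" by simp
  qed (use wh in \<open>auto simp: P_def\<close>)
  have "LIM e at_right 0. g e + K * ln e :> at_bot"
    by (rule filterlim_tendsto_add_at_bot_iff[OF glim, THEN iffD2],
        rule filterlim_tendsto_pos_mult_at_bot[OF tendsto_const Kpos ln_at_0])
  hence "eventually (\<lambda>e. g e + K * ln e \<le> -1) (at_right 0)" by (simp add: filterlim_at_bot)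
  with ev1 eq have "eventually (\<lambda>e::real. False) (at_right 0)"
    by eventually_elim simp
  thus False by simp
qed

lemma pythag:
  assumes amin: "is_arg_min (\<lambda>q. kl_div n q wh) (\<lambda>q. q \<in> capped_simplex n m) p"
    and wh: "\<forall>i<n. 0 < wh i" and whs: "(\<Sum>i<n. wh i) = 1" and m: "1 \<le> m" "m \<le> n"
    and uK: "u \<in> capped_simplex n m"
  shows "kl_div n u p \<le> kl_div n u wh"
proof -
  have pp: "\<forall>i<n. 0 < p i" by (rule proj_pos[OF amin wh m])
  have pK: "p \<in> capped_simplex n m" using amin by (simp add: is_arg_min_def)
  have u0: "\<forall>i<n. 0 \<le> u i" using uK by (simp add: capped_simplex_def)
  define phi where "phi = (\<lambda>e. \<Sum>i<n. (u i - p i) * ln ((p i + e * (u i - p i)) / wh i))"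
  have ev1: "eventually (\<lambda>e. 0 \<le> phi e) (at_right 0)"
  proof -
    have "eventually (\<lambda>e::real. e \<in> {0<..<1}) (at_right 0)" by (rule eventually_at_right_real) simp
    thus ?thesis
    proof (rule eventually_mono)
      fix e :: real assume e: "e \<in> {0<..<1}"
      have "\<forall>i<n. 0 < p i + e * (u i - p i)"
      proof (intro allI impI)
        fix i assume i: "i < n"
        have "p i + e * (u i - p i) = (1 - e) * p i + e * u i" by (simp add: algebra_simps)
        moreover have "0 < (1 - e) * p i" using e pp i by simp
        moreover have "0 \<le> e * u i" using e u0 i by simp
        ultimately show "0 < p i + e * (u i - p i)" by linarith
      qed
      thus "0 \<le> phi e" unfolding phi_def using var_ineq[OF amin uK wh] e by auto
    qed
  qed
  have lim: "(phi \<longlongrightarrow> phi 0) (at_right 0)"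
    unfolding phi_def
    by (intro tendsto_intros) (use wh pp in auto)
  have "0 \<le> phi 0" by (rule tendsto_lowerbound[OF lim ev1]) simp
  hence A: "(\<Sum>i<n. p i * ln (p i / wh i)) \<le> (\<Sum>i<n. u i * ln (p i / wh i))"
    by (simp add: phi_def algebra_simps sum_subtractf)
  have B: "0 \<le> kl_div n p wh"
    by (rule kl_nonneg) (use pp wh whs pK in \<open>auto simp: capped_simplex_def\<close>)
  have C: "kl_div n u wh - kl_div n u p = (\<Sum>i<n. u i * ln (p i / wh i))"
    unfolding kl_div_def sum_subtractf[symmetric]
  proof (rule sum.cong)
    fix i assume "i \<in> {..<n}"
    hence i: "0 < p i" "0 < wh i" "0 \<le> u i" using pp wh u0 by auto
    show "u i * ln (u i / wh i) - u i * ln (u i / p i) = u i * ln (p i / wh i)"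
    proof (cases "u i = 0")
      case False
      hence "0 < u i" using i by simp
      thus ?thesis using i by (simp add: ln_divide_pos algebra_simps)
    qed simp
  qed simp
  show ?thesis using A B C by (simp add: kl_div_def)
qed

definition indv :: "nat set \<Rightarrow> nat \<Rightarrow> real" where
  "indv S = (\<lambda>i. if i \<in> S then 1 else 0)"

lemma sum_indv: assumes "S \<subseteq> {..<n}" shows "(\<Sum>i<n. indv S i) = real (card S)"
proof -
  have "(\<Sum>i<n. indv S i) = (\<Sum>i\<in>{..<n} \<inter> S. 1)"
    unfolding indv_def by (simp add: sum.If_cases)
  also have "{..<n} \<inter> S = S" using assms by auto
  finally show ?thesis by simp
qed

lemma indv_in: assumes "S \<subseteq> {..<n}" "card S = m" shows "indv S \<in> subset_vecs n m"
proof -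
  have "{i. i < n \<and> indv S i = 1} = S" using assms(1) by (auto simp: indv_def)
  thus ?thesis using assms unfolding subset_vecs_def indv_def by auto
qed

lemma subset_vecs_finite: "finite (subset_vecs n m)"
proof -
  have "subset_vecs n m \<subseteq> indv ` Pow {..<n}"
  proof
    fix u assume u: "u \<in> subset_vecs n m"
    have "u = indv {i. i < n \<and> u i = 1}"
    proof
      fix i show "u i = indv {i. i < n \<and> u i = 1} i"
        using u unfolding subset_vecs_def indv_def
        by (cases "i < n") auto
    qed
    thus "u \<in> indv ` Pow {..<n}" by blast
  qed
  thus ?thesis by (rule finite_subset) simp
qed

lemma subset_vecs_ne: assumes "m \<le> n" shows "subset_vecs n m \<noteq> {}"
  using indv_in[of "{..<m}" n m] assms by auto

lemma vertex:
  fixes c :: "nat \<Rightarrow> real"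
  assumes m: "1 \<le> m" "m \<le> n" and qK: "q \<in> capped_simplex n m"
  shows "\<exists>u\<in>subset_vecs n m. (\<Sum>i<n. u i * c i) \<le> real m * (\<Sum>i<n. q i * c i)"
proof -
  define F where "F = {S. S \<subseteq> {..<n} \<and> card S = m}"
  define f where "f = (\<lambda>S. \<Sum>i\<in>S. c i)"
  have finF: "finite F" unfolding F_def by (rule finite_subset[of _ "Pow {..<n}"]) auto
  have "{..<m} \<in> F" unfolding F_def using m by auto
  hence neF: "F \<noteq> {}" by blast
  define S where "S = arg_min_on f F"
  have SF: "S \<in> F" and Smin: "\<not>(\<exists>x\<in>F. f x < f S)"
    unfolding S_def using arg_min_if_finite[OF finF neF] by auto
  have Ssub: "S \<subseteq> {..<n}" and Scard: "card S = m" using SF by (auto simp: F_def)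
  have finS: "finite S" using Ssub finite_subset by blast
  have exch: "c i \<le> c j" if i: "i \<in> S" and j: "j < n" "j \<notin> S" for i j
  proof (rule ccontr)
    assume "\<not> c i \<le> c j"
    define S' where "S' = insert j (S - {i})"
    have "S' \<in> F" unfolding F_def S'_def using Ssub Scard i j finS card_gt_0_iff[of S]
      by (auto simp: card_insert_if)
    moreover have "f S' = f S - c i + c j" unfolding f_def S'_def using finS i j
      by (simp add: sum_diff1)
    ultimately show False using Smin \<open>\<not> c i \<le> c j\<close> by force
  qed
  have Sne: "S \<noteq> {}" using Scard m by auto
  define th where "th = Max (c ` S)"
  have th1: "c i \<le> th" if "i \<in> S" for i unfolding th_def using finS that by simp
  have th2: "th \<le> c j" if "j < n" "j \<notin> S" for j
  proof -
    have "th \<in> c ` S" unfolding th_def using finS Sne by simp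
    thus ?thesis using exch that by auto
  qed
  define u where "u = indv S"
  have q: "\<forall>i<n. 0 \<le> q i \<and> q i \<le> 1 / real m" "(\<Sum>i<n. q i) = 1" using qK by (auto simp: capped_simplex_def)
  have mpos: "0 < real m" using m by simp
  have "0 \<le> (\<Sum>i<n. (real m * q i - u i) * (c i - th))"
  proof (rule sum_nonneg)
    fix i assume "i \<in> {..<n}"
    hence i: "i < n" by simp
    have mq: "real m * q i \<le> 1" "0 \<le> real m * q i" using q i mpos by (auto simp: field_simps)
    show "0 \<le> (real m * q i - u i) * (c i - th)"
    proof (cases "i \<in> S")
      case True thus ?thesis using th1 mq by (auto simp: u_def indv_def intro!: mult_nonpos_nonpos)
    next
      case False thus ?thesis using th2 i mq by (auto simp: u_def indv_def)
    qed
  qed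
  also have "(\<Sum>i<n. (real m * q i - u i) * (c i - th)) =
      real m * (\<Sum>i<n. q i * c i) - (\<Sum>i<n. u i * c i) - th * (real m * (\<Sum>i<n. q i) - (\<Sum>i<n. u i))"
    by (simp add: algebra_simps sum_subtractf sum_distrib_left sum.distrib)
  also have "(\<Sum>i<n. u i) = real m" unfolding u_def using sum_indv[OF Ssub] Scard by simp
  finally have "(\<Sum>i<n. u i * c i) \<le> real m * (\<Sum>i<n. q i * c i)" using q by simp
  moreover have "u \<in> subset_vecs n m" unfolding u_def by (rule indv_in[OF Ssub Scard])
  ultimately show ?thesis by blast
qed

lemma mu_facts:
  assumes wK: "wt \<in> capped_simplex n m" and lb: "\<forall>i<n. 0 \<le> l i \<and> l i \<le> 1"
    and eta: "0 \<le> eta" and al: "0 < al" "al < 1" and n: "1 \<le> n"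
  shows "0 < (\<Sum>j<n. wt j * exp (- eta * l j))"
    and "\<forall>i<n. al / real n \<le> mixed_update n eta al wt l i"
    and "\<forall>i<n. 0 < mixed_update n eta al wt l i"
    and "(\<Sum>i<n. mixed_update n eta al wt l i) = 1"
proof -
  define Z where "Z = (\<Sum>j<n. wt j * exp (- eta * l j))"
  have w0: "\<forall>i<n. 0 \<le> wt i" and ws: "(\<Sum>i<n. wt i) = 1" using wK by (auto simp: capped_simplex_def)
  have "(\<Sum>j<n. wt j * exp (- eta)) \<le> Z" unfolding Z_def
  proof (rule sum_mono)
    fix j assume "j \<in> {..<n}"
    hence "- eta \<le> - eta * l j" "0 \<le> wt j" using lb eta w0 by (auto simp: mult_left_le)
    thus "wt j * exp (- eta) \<le> wt j * exp (- eta * l j)" by (intro mult_left_mono) auto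
  qed
  moreover have "(\<Sum>j<n. wt j * exp (- eta)) = exp (- eta)" using ws by (simp add: sum_distrib_right[symmetric])
  ultimately have Zp: "0 < Z" by (smt (verit) exp_gt_zero)
  thus "0 < (\<Sum>j<n. wt j * exp (- eta * l j))" by (simp add: Z_def)
  have np: "0 < real n" using n by simp
  have vnn: "0 \<le> wt i * exp (- eta * l i) / Z" if "i < n" for i using w0 that Zp by simp
  show lbd: "\<forall>i<n. al / real n \<le> mixed_update n eta al wt l i"
  proof (intro allI impI)
    fix i assume "i < n"
    hence "0 \<le> (1 - al) * (wt i * exp (- eta * l i) / Z)" using vnn al by (intro mult_nonneg_nonneg) auto
    thus "al / real n \<le> mixed_update n eta al wt l i"
      unfolding mixed_update_def Z_def[symmetric] by linarith
  qed
  show "\<forall>i<n. 0 < mixed_update n eta al wt l i"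
    using lbd al np by (meson divide_pos_pos less_le_trans)
  have "(\<Sum>i<n. wt i * exp (- eta * l i) / Z) = 1" using Zp by (simp add: sum_divide_distrib[symmetric] Z_def)
  hence S: "(\<Sum>i<n. (1 - al) * (wt i * exp (- eta * l i) / Z)) = 1 - al"
    by (subst sum_distrib_left[symmetric]) simp
  have "(\<Sum>i<n. mixed_update n eta al wt l i) = (\<Sum>i<n. al / real n) + (\<Sum>i<n. (1 - al) * (wt i * exp (- eta * l i) / Z))"
    unfolding mixed_update_def Z_def[symmetric] by (rule sum.distrib)
  thus "(\<Sum>i<n. mixed_update n eta al wt l i) = 1" using S np by simp
qed

lemma kl_step:
  assumes wK: "wt \<in> capped_simplex n m" and wp: "\<forall>i<n. 0 < wt i" and qK: "q \<in> capped_simplex n m"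
    and lb: "\<forall>i<n. 0 \<le> l i \<and> l i \<le> 1"
    and eta: "0 \<le> eta" and al: "0 < al" "al < 1" and n: "1 \<le> n"
  shows "(1 - exp (- eta)) * dotn n wt l \<le> kl_div n q wt - kl_div n q (mixed_update n eta al wt l)
           + eta * dotn n q l - ln (1 - al)"
proof -
  define Z where "Z = (\<Sum>j<n. wt j * exp (- eta * l j))"
  define wh where "wh = mixed_update n eta al wt l"
  have Zp: "0 < Z" using mu_facts[OF wK lb eta al n] by (simp add: Z_def)
  have w0: "\<forall>i<n. 0 \<le> wt i" and ws: "(\<Sum>i<n. wt i) = 1" using wK by (auto simp: capped_simplex_def)
  have q0: "\<forall>i<n. 0 \<le> q i" and qs: "(\<Sum>i<n. q i) = 1" using qK by (auto simp: capped_simplex_def)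
  have np: "0 < real n" using n by simp
  have trm: "q i * ln (q i / wh i) \<le> q i * (ln (q i / wt i) + eta * l i + ln Z - ln (1 - al))"
    if i: "i < n" for i
  proof (cases "q i = 0")
    case False
    hence qp: "0 < q i" using q0 i by (simp add: less_le)
    define v where "v = wt i * exp (- eta * l i) / Z"
    have "0 < wt i" using wp i by simp
    have vp: "0 < v" unfolding v_def using wp i Zp by simp
    have whv: "(1 - al) * v \<le> wh i"
      unfolding wh_def mixed_update_def v_def[symmetric] Z_def[symmetric] using al np by simp
    have p1: "0 < (1 - al) * v" using vp al by simp
    have "ln (q i / wh i) \<le> ln (q i / ((1 - al) * v))"
      using whv p1 qp by (intro ln_mono divide_left_mono) (auto intro: less_le_trans)
    also have "ln (q i / ((1 - al) * v)) = ln (q i) - ln (1 - al) - ln (wt i) + eta * l i + ln Z"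
    proof -
      have wi: "0 < wt i" by fact
      have "ln v = ln (wt i * exp (- eta * l i)) - ln Z" unfolding v_def using wi Zp by (simp add: ln_divide_pos)
      also have "ln (wt i * exp (- eta * l i)) = ln (wt i) - eta * l i" using wi by (simp add: ln_mult)
      finally have lv: "ln v = ln (wt i) - eta * l i - ln Z" .
      have "ln (q i / ((1 - al) * v)) = ln (q i) - ln ((1 - al) * v)" using qp p1 by (simp add: ln_divide_pos)
      also have "ln ((1 - al) * v) = ln (1 - al) + ln v" using al vp by (simp add: ln_mult)
      finally show ?thesis using lv by simp
    qed
    also have "\<dots> = ln (q i / wt i) + eta * l i + ln Z - ln (1 - al)"
      using qp wp i by (simp add: ln_divide_pos)
    finally show ?thesis using qp by (intro mult_left_mono) auto
  qed simp
  have "kl_div n q wh \<le> (\<Sum>i<n. q i * (ln (q i / wt i) + eta * l i + ln Z - ln (1 - al)))"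
    unfolding kl_div_def by (rule sum_mono) (use trm in auto)
  also have "\<dots> = kl_div n q wt + eta * dotn n q l + (ln Z - ln (1 - al)) * (\<Sum>i<n. q i)"
    by (simp add: kl_div_def dotn_def algebra_simps sum.distrib sum_subtractf sum_distrib_left sum_distrib_right)
  finally have K: "kl_div n q wh \<le> kl_div n q wt + eta * dotn n q l + ln Z - ln (1 - al)"
    using qs by simp
  have "Z - 1 = (\<Sum>j<n. wt j * (exp (- eta * l j) - 1))"
    using ws by (simp add: Z_def algebra_simps sum_subtractf)
  also have "\<dots> \<le> (\<Sum>j<n. wt j * (- (1 - exp (- eta)) * l j))"
  proof (rule sum_mono)
    fix j assume "j \<in> {..<n}"
    hence "exp (- eta * l j) - 1 \<le> - (1 - exp (- eta)) * l j" "0 \<le> wt j"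
      using exp_lin[of "l j" eta] lb eta w0 by (auto simp: algebra_simps)
    thus "wt j * (exp (- eta * l j) - 1) \<le> wt j * (- (1 - exp (- eta)) * l j)"
      by (intro mult_left_mono) auto
  qed
  also have "\<dots> = - (1 - exp (- eta)) * dotn n wt l"
    by (simp add: dotn_def sum_distrib_left algebra_simps)
  finally have "(1 - exp (- eta)) * dotn n wt l \<le> 1 - Z" by (simp add: algebra_simps)
  moreover have "ln Z \<le> Z - 1" using Zp by (rule ln_le_minus_one)
  ultimately show ?thesis using K unfolding wh_def by linarith
qed

lemma run_K: assumes run: "is_run n k T eta al l w" and t: "1 \<le> t" "t \<le> T"
  shows "w t \<in> capped_simplex n (n - k)"
proof (cases "t = 1")
  case True thus ?thesis using run by (simp add: is_run_def)
next
  case False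
  define t' where "t' = t - 1"
  have t': "t = t' + 1" "1 \<le> t'" "t' < T" using t False unfolding t'_def by auto
  thus ?thesis using run by (auto simp: is_run_def is_arg_min_def)
qed

lemma run_amin: assumes run: "is_run n k T eta al l w" and t: "1 \<le> t" "t < T"
  shows "is_arg_min (\<lambda>q. kl_div n q (mixed_update n eta al (w t) (l t))) (\<lambda>q. q \<in> capped_simplex n (n - k)) (w (t + 1))"
  using run t by (simp add: is_run_def)

locale alg_run =
  fixes n k m T :: nat and eta al :: real and l w :: "nat \<Rightarrow> nat \<Rightarrow> real"
  assumes m: "m = n - k" "1 \<le> m" "m \<le> n"
    and T1: "1 \<le> T"
    and lb: "\<forall>t i. 1 \<le> t \<and> t \<le> T \<and> i < n \<longrightarrow> 0 \<le> l t i \<and> l t i \<le> 1"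
    and eta: "0 \<le> eta" and al: "0 < al" "al < 1"
    and run: "is_run n k T eta al l w"
begin

abbreviation "K \<equiv> capped_simplex n m"
abbreviation "wh t \<equiv> mixed_update n eta al (w t) (l t)"

lemma n1: "1 \<le> n" using m by simp

lemma wK: "1 \<le> t \<Longrightarrow> t \<le> T \<Longrightarrow> w t \<in> K"
  using run_K[OF run] m(1) by simp

lemma lbt: "1 \<le> t \<Longrightarrow> t \<le> T \<Longrightarrow> \<forall>i<n. 0 \<le> l t i \<and> l t i \<le> 1"
  using lb by simp

lemma whf: assumes "1 \<le> t" "t \<le> T"
  shows "\<forall>i<n. al / real n \<le> wh t i" "\<forall>i<n. 0 < wh t i" "(\<Sum>i<n. wh t i) = 1"
  using mu_facts[OF wK[OF assms] lbt[OF assms] eta al n1] by auto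

lemma amin: "1 \<le> t \<Longrightarrow> t < T \<Longrightarrow>
   is_arg_min (\<lambda>q. kl_div n q (wh t)) (\<lambda>q. q \<in> K) (w (t + 1))"
  using run_amin[OF run] m(1) by simp

lemma wpos: assumes "2 \<le> t" "t \<le> T" shows "\<forall>i<n. 0 < w t i"
proof -
  obtain t' where t': "t = t' + 1" "1 \<le> t'" "t' < T" using assms
    by (intro that[of "t - 1"]) auto
  show ?thesis using proj_pos[OF amin[OF t'(2,3)] whf(2)[OF t'(2)] m(2,3)] t'(1)
    using t' by simp
qed

lemma pyth: assumes "1 \<le> t" "t < T" "q \<in> K"
  shows "kl_div n q (w (t + 1)) \<le> kl_div n q (wh t)"
  using pythag[OF amin[OF assms(1,2)] whf(2,3)[OF assms(1)] m(2,3) assms(3)] assms by simp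

lemma kl_wh_bound: assumes "1 \<le> t" "t \<le> T" "q \<in> K"
  shows "kl_div n q (wh t) \<le> ln (real n / (real m * al))"
proof -
  have q: "\<forall>i<n. 0 \<le> q i \<and> q i \<le> 1 / real m" "(\<Sum>i<n. q i) = 1" using assms(3) by (auto simp: capped_simplex_def)
  have np: "0 < real n" and mp: "0 < real m" using m by auto
  have "kl_div n q (wh t) \<le> (\<Sum>i<n. q i * ln (real n / (real m * al)))"
    unfolding kl_div_def
  proof (rule sum_mono)
    fix i assume "i \<in> {..<n}"
    hence i: "i < n" by simp
    show "q i * ln (q i / wh t i) \<le> q i * ln (real n / (real m * al))"
    proof (cases "q i = 0")
      case False
      hence qp: "0 < q i" using q i by (simp add: less_le)
      have wl: "al / real n \<le> wh t i" using whf(1)[OF assms(1,2)] i by simp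
      have alp: "0 < al / real n" using al np by simp
      have "q i / wh t i \<le> (1 / real m) / (al / real n)"
        using qp q i wl alp by (intro frac_le) auto
      also have "\<dots> = real n / (real m * al)" by (simp add: field_simps)
      finally have "ln (q i / wh t i) \<le> ln (real n / (real m * al))"
        using qp wl alp by (intro ln_mono) auto
      thus ?thesis using qp by (intro mult_left_mono) auto
    qed simp
  qed
  also have "\<dots> = ln (real n / (real m * al))" using q(2) by (simp add: sum_distrib_right[symmetric])
  finally show ?thesis .
qed

lemma kl_start: assumes "2 \<le> r" "r \<le> T" "q \<in> K"
  shows "kl_div n q (w r) \<le> ln (real n / (real m * al))"
proof -
  obtain t' where t': "r = t' + 1" "1 \<le> t'" "t' < T" using assms
    by (intro that[of "r - 1"]) auto
  show ?thesis using pyth[OF t'(2,3) assms(3)] kl_wh_bound[OF t'(2) _ assms(3)] t' by simp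
qed

lemma tele: assumes r: "2 \<le> r" and rs: "r \<le> s" and sT: "s \<le> T" and qK: "q \<in> K"
  shows "(1 - exp (- eta)) * (\<Sum>t=r..s. dotn n (w t) (l t)) \<le>
     kl_div n q (w r) - kl_div n q (wh s) + eta * (\<Sum>t=r..s. dotn n q (l t)) - real (s + 1 - r) * ln (1 - al)"
  using rs sT
proof (induction s rule: dec_induct)
  case base
  have "(1 - exp (- eta)) * dotn n (w r) (l r) \<le> kl_div n q (w r) - kl_div n q (wh r) + eta * dotn n q (l r) - ln (1 - al)"
    using kl_step[OF wK wpos qK lbt eta al n1] r base by simp
  thus ?case using r by simp
next
  case (step s)
  have IH: "(1 - exp (- eta)) * (\<Sum>t=r..s. dotn n (w t) (l t)) \<le>
     kl_div n q (w r) - kl_div n q (wh s) + eta * (\<Sum>t=r..s. dotn n q (l t)) - real (s + 1 - r) * ln (1 - al)"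
    using step by simp
  have s1: "1 \<le> s" "s < T" using step r by auto
  have P: "kl_div n q (w (s + 1)) \<le> kl_div n q (wh s)" by (rule pyth[OF s1 qK])
  have S: "(1 - exp (- eta)) * dotn n (w (Suc s)) (l (Suc s)) \<le> kl_div n q (w (Suc s)) - kl_div n q (wh (Suc s)) + eta * dotn n q (l (Suc s)) - ln (1 - al)"
    by (rule kl_step[OF wK wpos qK lbt eta al n1]) (use r step in auto)
  have r1: "real (Suc s + 1 - r) = real (s + 1 - r) + 1" using step r by auto
  have e1: "(\<Sum>t=r..Suc s. dotn n (w t) (l t)) = (\<Sum>t=r..s. dotn n (w t) (l t)) + dotn n (w (Suc s)) (l (Suc s))"
    using step by (simp add: sum.cl_ivl_Suc)
  have e2: "(\<Sum>t=r..Suc s. dotn n q (l t)) = (\<Sum>t=r..s. dotn n q (l t)) + dotn n q (l (Suc s))"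
    using step by (simp add: sum.cl_ivl_Suc)
  show ?case unfolding e1 e2 r1 using IH P S by (simp add: algebra_simps)
qed

end

lemma final_alg:
  fixes D L M Am x eta :: real
  assumes D: "0 < D" and L: "0 < L" and x: "x = sqrt (2 * D / L)" and eta: "eta = ln (1 + x)"
    and M: "0 \<le> M" "M \<le> L" and A: "(1 - exp (- eta)) * Am \<le> D + eta * M"
  shows "Am - M \<le> D + 3 / 2 * sqrt (2 * L * D)"
proof -
  have xp: "0 < x" using x D L by simp
  have x2: "x * x = 2 * D / L" using x D L by (simp add: real_sqrt_mult_self)
  have ex: "exp (- eta) = 1 / (1 + x)" using eta xp by (simp add: exp_minus inverse_eq_divide)
  have c: "1 - exp (- eta) = x / (1 + x)" using ex xp by (simp add: field_simps)
  have etax: "eta \<le> x" using eta xp by (simp add: ln_add_one_self_le_self)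
  have "x / (1 + x) * Am \<le> D + x * M" using A c etax M(1) by (smt (verit) mult_right_mono)
  hence "x * Am \<le> (1 + x) * (D + x * M)" using xp by (simp add: field_simps)
  hence "x * (Am - M) \<le> D + x * D + x * x * M" by (simp add: algebra_simps)
  also have "\<dots> \<le> D + x * D + x * x * L" using M xp by (simp add: mult_left_mono)
  finally have B: "x * (Am - M) \<le> D + x * D + x * x * L" .
  have Dx: "D = L * x * x / 2" using x2 L by (simp add: field_simps)
  have "D + x * D + x * x * L = x * (D + 3 / 2 * (L * x))" by (subst (1) Dx) (simp add: algebra_simps)
  hence B2: "x * (Am - M) \<le> x * (D + 3 / 2 * (L * x))" using B by linarith
  have "Am - M \<le> D + 3 / 2 * (L * x)" using B2 xp by simp
  moreover have "L * x = sqrt (2 * L * D)"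
  proof -
    have "L * x = sqrt (L * L) * sqrt (2 * D / L)" using L x by simp
    also have "\<dots> = sqrt (L * L * (2 * D / L))" by (rule real_sqrt_mult[symmetric])
    also have "L * L * (2 * D / L) = 2 * L * D" using L by (simp add: field_simps)
    finally show ?thesis .
  qed
  ultimately show ?thesis by simp
qed

context alg_run begin

lemma regret_core: assumes r: "2 \<le> r" and rs: "r \<le> s" and sT: "s \<le> T" and qK: "q \<in> K"
  shows "(1 - exp (- eta)) * (\<Sum>t=r..s. dotn n (w t) (l t)) \<le>
     ln (real n / (real m * al)) + eta * (\<Sum>t=r..s. dotn n q (l t)) - real T * ln (1 - al)"
proof -
  have T1': "1 \<le> s" using r rs by simp
  have q: "\<forall>i<n. 0 \<le> q i" "(\<Sum>i<n. q i) = 1" using qK by (auto simp: capped_simplex_def)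
  have "0 \<le> kl_div n q (wh s)"
    by (rule kl_nonneg) (use q whf(2,3)[OF T1' sT] in auto)
  moreover have "kl_div n q (w r) \<le> ln (real n / (real m * al))" by (rule kl_start[OF r _ qK]) (use rs sT in simp)
  moreover have "- real (s + 1 - r) * ln (1 - al) \<le> - real T * ln (1 - al)"
  proof -
    have "ln (1 - al) \<le> 0" using al by simp
    moreover have "real (s + 1 - r) \<le> real T" using r rs sT by simp
    ultimately show ?thesis by (simp add: mult_right_mono_neg)
  qed
  ultimately show ?thesis using tele[OF r rs sT qK] by linarith
qed

end

lemma sv_props: assumes "u \<in> subset_vecs n m"
  shows "(\<Sum>i<n. u i) = real m" "\<forall>i<n. 0 \<le> u i \<and> u i \<le> 1" "\<forall>i\<ge>n. u i = 0"
proof -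
  have eq: "u = indv {i. i < n \<and> u i = 1}"
  proof
    fix i show "u i = indv {i. i < n \<and> u i = 1} i"
      using assms unfolding subset_vecs_def indv_def by (cases "i < n") auto
  qed
  have "(\<Sum>i<n. u i) = real (card {i. i < n \<and> u i = 1})"
    by (subst eq) (rule sum_indv, auto)
  thus "(\<Sum>i<n. u i) = real m" using assms by (simp add: subset_vecs_def)
  show "\<forall>i<n. 0 \<le> u i \<and> u i \<le> 1" "\<forall>i\<ge>n. u i = 0" using assms unfolding subset_vecs_def by auto
qed

lemma Min_mono_img: fixes f g :: "'a \<Rightarrow> real" assumes "finite A" "A \<noteq> {}" "\<forall>a\<in>A. g a \<le> f a"
  shows "Min (g ` A) \<le> Min (f ` A)"
proof -
  have "Min (f ` A) \<in> f ` A" using assms by simp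
  then obtain a where a: "a \<in> A" "Min (f ` A) = f a" by auto
  have "Min (g ` A) \<le> g a" using assms a by simp
  moreover have "g a \<le> f a" using assms a by simp
  ultimately show ?thesis using a(2) by linarith
qed

lemma dot_swap: "(\<Sum>t=r..s. dotn n u (l t)) = (\<Sum>i<n. u i * (\<Sum>t=r..s. l t i))"
  unfolding dotn_def by (simp add: sum_distrib_left sum.swap[of _ "{r..s}"])

lemma main:
  fixes n k T r s :: nat and L :: real and l w :: "nat \<Rightarrow> nat \<Rightarrow> real"
  assumes k1: "1 \<le> k" and kn: "k < n" and T1: "1 \<le> T" and Lp: "0 < L"
    and lb: "\<forall>t i. 1 \<le> t \<and> t \<le> T \<and> i < n \<longrightarrow> 0 \<le> l t i \<and> l t i \<le> 1"
    and Lb: "\<forall>r s. 1 \<le> r \<and> r \<le> s \<and> s \<le> T \<longrightarrow>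
        (INF q\<in>capped_simplex n (n - k). \<Sum>t=r..s. real (n - k) * dotn n q (l t)) \<le> L"
    and run: "is_run n k T (ln (1 + sqrt (2 * (real (n - k) * ln (real n * (1 + real (n - k) * real T)) + 1) / L)))
                  (1 / (real T * real (n - k) + 1)) l w"
    and rs: "1 \<le> r" "r \<le> s" "s \<le> T"
  shows "interval_regret n k l w r s
              \<le> 3 * (sqrt (2 * L * (real (n - k) * ln (real n * (1 + real (n - k) * real T)) + 1))
                     + (real (n - k) * ln (real n * (1 + real (n - k) * real T)) + 1))"
proof -
  define m where "m = n - k"
  define Lam where "Lam = ln (real n * (1 + real m * real T))"
  define D where "D = real m * Lam + 1"
  define x where "x = sqrt (2 * D / L)"
  define eta where "eta = ln (1 + x)"
  define al where "al = 1 / (real T * real m + 1)"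
  have m1: "1 \<le> m" "m \<le> n" using k1 kn by (auto simp: m_def)
  have mp: "0 < real m" "0 < real T" using m1 T1 by auto
  have n2: "2 \<le> real n" using k1 kn by simp
  have y2: "2 \<le> real n * (1 + real m * real T)"
  proof -
    have "1 * 1 \<le> real m * real T" using m1 T1 by (intro mult_mono) auto
    hence "2 * 1 \<le> real n * (1 + real m * real T)" using n2 by (intro mult_mono) auto
    thus ?thesis by simp
  qed
  have Lam_half: "1 / 2 \<le> Lam"
  proof -
    define y where "y = real n * (1 + real m * real T)"
    have yp: "0 < y" using y2 y_def by simp
    have "ln (1 / y) \<le> 1 / y - 1" using yp by (intro ln_le_minus_one) simp
    moreover have "ln (1 / y) = - ln y" using yp by (simp add: ln_div)
    moreover have "1 / y \<le> 1 / 2" using y2 y_def by (simp add: field_simps)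
    ultimately show ?thesis unfolding Lam_def y_def[symmetric] by linarith
  qed
  have Dp: "0 < D" using Lam_half mp by (simp add: D_def add_pos_nonneg)
  have mD: "real m \<le> 2 * D"
  proof -
    have "real m * (1 / 2) \<le> real m * Lam" using Lam_half mp by (intro mult_left_mono) auto
    thus ?thesis unfolding D_def by simp
  qed
  have xp: "0 < x" using Dp Lp by (simp add: x_def)
  have eta0: "0 \<le> eta" using xp by (simp add: eta_def)
  have tm: "0 < real T * real m" using mp by simp
  have al: "0 < al" "al < 1" using tm by (auto simp: al_def divide_less_eq)
  have run': "is_run n k T eta al l w"
    using run unfolding eta_def x_def D_def Lam_def al_def m_def by simp
  interpret A: alg_run n k m T eta al l w
    by (unfold_locales) (use m_def m1 T1 lb eta0 al run' in auto)
  define V where "V = subset_vecs n m"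
  have finV: "finite V" and neV: "V \<noteq> {}" unfolding V_def using subset_vecs_finite subset_vecs_ne m1 by auto
  define Mf where "Mf = (\<lambda>r s. Min ((\<lambda>u. \<Sum>t=r..s. dotn n u (l t)) ` V))"
  have reg: "interval_regret n k l w r s = real m * (\<Sum>t=r..s. dotn n (w t) (l t)) - Mf r s" for r s
    unfolding interval_regret_def expected_loss_def Mf_def V_def m_def by (simp add: sum_distrib_left)
  define S where "S = sqrt (2 * L * D)"
  have S0: "0 \<le> S" unfolding S_def using Lp Dp by simp
  have Kne: "A.K \<noteq> {}"
  proof -
    define u where "u = (\<lambda>i::nat. if i < n then 1 / real n else 0)"
    have "(\<Sum>i<n. u i) = 1" using n2 by (simp add: u_def)
    moreover have "1 / real n \<le> 1 / real m" using m1 by (simp add: frac_le)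
    ultimately have "u \<in> A.K" unfolding capped_simplex_def u_def by auto
    thus ?thesis by blast
  qed
  have M0: "0 \<le> Mf r s" if "1 \<le> r" "s \<le> T" for r s
    unfolding Mf_def
  proof (subst Min_ge_iff)
    show "\<forall>a\<in>(\<lambda>u. \<Sum>t=r..s. dotn n u (l t)) ` V. 0 \<le> a"
    proof
      fix a assume "a \<in> (\<lambda>u. \<Sum>t=r..s. dotn n u (l t)) ` V"
      then obtain u where u: "u \<in> V" "a = (\<Sum>t=r..s. dotn n u (l t))" by auto
      have "0 \<le> dotn n u (l t)" if "t \<in> {r..s}" for t
        unfolding dotn_def using sv_props(2)[of u n m] u(1) lb that \<open>1 \<le> r\<close> \<open>s \<le> T\<close>
        by (intro sum_nonneg) (auto simp: V_def)
      hence "0 \<le> (\<Sum>t=r..s. dotn n u (l t))" by (intro sum_nonneg) auto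
      thus "0 \<le> a" using u by simp
    qed
  qed (use finV neV in auto)
  have MLe: "Mf r s \<le> L" if "1 \<le> r" "r \<le> s" "s \<le> T" for r s
  proof -
    have "Mf r s \<le> (INF q\<in>A.K. \<Sum>t=r..s. real m * dotn n q (l t))"
    proof (rule cINF_greatest[OF Kne])
      fix q assume qK: "q \<in> A.K"
      obtain u where u: "u \<in> subset_vecs n m" "(\<Sum>i<n. u i * (\<Sum>t=r..s. l t i)) \<le> real m * (\<Sum>i<n. q i * (\<Sum>t=r..s. l t i))"
        using vertex[OF m1 qK, where c = "\<lambda>i. \<Sum>t=r..s. l t i"] by (elim bexE) simp
      have "Mf r s \<le> (\<Sum>t=r..s. dotn n u (l t))" unfolding Mf_def
        by (rule Min_le) (use finV u(1) V_def in auto)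
      also have "\<dots> \<le> real m * (\<Sum>t=r..s. dotn n q (l t))"
        using u(2) unfolding dot_swap by linarith
      also have "\<dots> = (\<Sum>t=r..s. real m * dotn n q (l t))" by (simp add: sum_distrib_left)
      finally show "Mf r s \<le> (\<Sum>t=r..s. real m * dotn n q (l t))" .
    qed
    also have "\<dots> \<le> L"
    proof -
      have "(INF q\<in>capped_simplex n (n - k). \<Sum>t=r..s. real (n - k) * dotn n q (l t)) \<le> L"
        using Lb that by blast
      thus ?thesis unfolding m_def .
    qed
    finally show ?thesis .
  qed
  have R2: "real m * (\<Sum>t=r..s. dotn n (w t) (l t)) - Mf r s \<le> D + 3 / 2 * S"
    if r2: "2 \<le> r" "r \<le> s" "s \<le> T" for r s
  proof -
    have "Mf r s \<in> (\<lambda>u. \<Sum>t=r..s. dotn n u (l t)) ` V" unfolding Mf_def using finV neV by simp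
    then obtain u0 where u0: "u0 \<in> V" "Mf r s = (\<Sum>t=r..s. dotn n u0 (l t))" by auto
    have u0p: "(\<Sum>i<n. u0 i) = real m" "\<forall>i<n. 0 \<le> u0 i \<and> u0 i \<le> 1" "\<forall>i\<ge>n. u0 i = 0"
      using sv_props[of u0 n m] u0 by (auto simp: V_def)
    define q0 where "q0 = (\<lambda>i. u0 i / real m)"
    have q0K: "q0 \<in> A.K"
    proof -
      have "(\<Sum>i<n. q0 i) = 1" using u0p(1) mp by (simp add: q0_def sum_divide_distrib[symmetric])
      moreover have "\<forall>i<n. 0 \<le> q0 i \<and> q0 i \<le> 1 / real m" using u0p(2) mp by (simp add: q0_def divide_right_mono)
      moreover have "\<forall>i\<ge>n. q0 i = 0" using u0p(3) by (simp add: q0_def)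
      ultimately show ?thesis unfolding capped_simplex_def by auto
    qed
    have Q: "(\<Sum>t=r..s. dotn n q0 (l t)) = Mf r s / real m"
      unfolding u0(2) q0_def dotn_def by (simp add: sum_divide_distrib)
    have core: "(1 - exp (- eta)) * (\<Sum>t=r..s. dotn n (w t) (l t)) \<le>
       ln (real n / (real m * al)) + eta * (Mf r s / real m) - real T * ln (1 - al)"
      using A.regret_core[OF r2 q0K] Q by simp
    have l1: "ln (real n / (real m * al)) \<le> Lam"
    proof -
      have "real n / (real m * al) = real n * (real T * real m + 1) / real m" using mp by (simp add: al_def)
      also have "\<dots> \<le> real n * (real T * real m + 1) / 1"
        by (rule divide_left_mono) (use mp n2 m1 in auto)
      finally have "real n / (real m * al) \<le> real n * (1 + real m * real T)" by (simp add: algebra_simps)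
      moreover have "0 < real n / (real m * al)" using mp n2 al by simp
      ultimately show ?thesis unfolding Lam_def by (rule ln_mono)
    qed
    have l2: "- real T * ln (1 - al) \<le> 1 / real m"
    proof -
      have e: "1 - al = real T * real m / (real T * real m + 1)" using tm by (simp add: al_def divide_simps add_pos_pos)
      have p: "0 < 1 - al" using al by simp
      have "ln (1 / (1 - al)) \<le> 1 / (1 - al) - 1" using p by (intro ln_le_minus_one) simp
      moreover have "ln (1 / (1 - al)) = - ln (1 - al)" using p by (simp add: ln_div)
      moreover have "1 / (1 - al) - 1 = 1 / (real T * real m)" using mp unfolding e by (simp add: field_simps)
      ultimately have "- ln (1 - al) \<le> 1 / (real T * real m)" by simp
      hence "real T * (- ln (1 - al)) \<le> real T * (1 / (real T * real m))" using mp by (intro mult_left_mono) auto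
      thus ?thesis using mp by simp
    qed
    have "(1 - exp (- eta)) * (\<Sum>t=r..s. dotn n (w t) (l t)) \<le> Lam + 1 / real m + eta * (Mf r s / real m)"
      using core l1 l2 by linarith
    hence "real m * ((1 - exp (- eta)) * (\<Sum>t=r..s. dotn n (w t) (l t))) \<le> real m * (Lam + 1 / real m + eta * (Mf r s / real m))"
      using mp by (intro mult_left_mono) auto
    hence "(1 - exp (- eta)) * (real m * (\<Sum>t=r..s. dotn n (w t) (l t))) \<le> D + eta * Mf r s"
      using mp by (simp add: D_def algebra_simps)
    from final_alg[OF Dp Lp x_def eta_def M0 MLe this] r2
    show ?thesis unfolding S_def by simp
  qed
  have goal_eq: "3 * (sqrt (2 * L * (real (n - k) * ln (real n * (1 + real (n - k) * real T)) + 1))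
                     + (real (n - k) * ln (real n * (1 + real (n - k) * real T)) + 1)) = 3 * (S + D)"
    by (simp add: S_def D_def Lam_def m_def)
  have "interval_regret n k l w r s \<le> 3 * (S + D)"
  proof (cases "r = 1")
    case False
    hence "2 \<le> r" using rs by simp
    thus ?thesis using R2[OF _ rs(2,3)] reg[of r s] S0 Dp by simp
  next
    case True
    have w1: "w 1 \<in> A.K" using A.wK T1 by simp
    have d1: "dotn n (w 1) (l 1) \<le> 1"
    proof -
      have "dotn n (w 1) (l 1) \<le> (\<Sum>i<n. w 1 i)" unfolding dotn_def
      proof (rule sum_mono)
        fix i assume "i \<in> {..<n}"
        hence "0 \<le> w 1 i" "l 1 i \<le> 1" using w1 lb T1 by (auto simp: capped_simplex_def)
        thus "w 1 i * l 1 i \<le> w 1 i" by (simp add: mult_left_le)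
      qed
      thus ?thesis using w1 by (simp add: capped_simplex_def)
    qed
    have md: "real m * dotn n (w 1) (l 1) \<le> 2 * D" using d1 mD mp
      by (meson mult_left_le order_trans less_imp_le)
    show ?thesis
    proof (cases "s = 1")
      case True
      have "interval_regret n k l w r s = real m * dotn n (w 1) (l 1) - Mf 1 1"
        using reg[of 1 1] \<open>r = 1\<close> True by simp
      thus ?thesis using md M0[of 1 1] T1 S0 Dp by simp
    next
      case False
      hence s2: "2 \<le> s" using rs by simp
      have split: "(\<Sum>t=1..s. f t) = f 1 + (\<Sum>t=2..s. f t)" for f :: "nat \<Rightarrow> real"
        using sum.atLeast_Suc_atMost[of 1 s f] rs by (simp add: numeral_2_eq_2)
      have mono: "Mf 2 s \<le> Mf 1 s" unfolding Mf_def
      proof (rule Min_mono_img[OF finV neV], intro ballI)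
        fix u assume "u \<in> V"
        have "0 \<le> dotn n u (l 1)"
          unfolding dotn_def using sv_props(2)[of u n m] \<open>u \<in> V\<close> lb T1
          by (intro sum_nonneg) (auto simp: V_def)
        thus "(\<Sum>t=2..s. dotn n u (l t)) \<le> (\<Sum>t=1..s. dotn n u (l t))" using split by simp
      qed
      have "interval_regret n k l w r s = real m * dotn n (w 1) (l 1) + (real m * (\<Sum>t=2..s. dotn n (w t) (l t)) - Mf 1 s)"
        using reg[of 1 s] \<open>r = 1\<close> split by (simp add: algebra_simps)
      moreover have "real m * (\<Sum>t=2..s. dotn n (w t) (l t)) - Mf 2 s \<le> D + 3 / 2 * S"
        using R2[OF _ s2 rs(3)] by simp
      moreover have "3 * (S + D) = 3 * S + 3 * D" by simp
      ultimately show ?thesis using md mono S0 Dp by linarith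
    qed
  qed
  thus ?thesis using goal_eq by simp
qed

theorem theorem4p1:
  "\<exists>C::real. \<forall>(n::nat) (k::nat) (T::nat) (L::real) (l::nat \<Rightarrow> nat \<Rightarrow> real) (w::nat \<Rightarrow> nat \<Rightarrow> real).
     1 \<le> k \<and> k < n \<and> 1 \<le> T \<and> 0 < L \<and>
     (\<forall>t i. 1 \<le> t \<and> t \<le> T \<and> i < n \<longrightarrow> 0 \<le> l t i \<and> l t i \<le> 1) \<and>
     (\<forall>r s. 1 \<le> r \<and> r \<le> s \<and> s \<le> T \<longrightarrow>
        (INF q\<in>capped_simplex n (n - k). \<Sum>t=r..s. real (n - k) * dotn n q (l t)) \<le> L) \<and>
     is_run n k T (ln (1 + sqrt (2 * (real (n - k) * ln (real n * (1 + real (n - k) * real T)) + 1) / L)))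
                  (1 / (real T * real (n - k) + 1)) l w
     \<longrightarrow> (\<forall>r s. 1 \<le> r \<and> r \<le> s \<and> s \<le> T \<longrightarrow>
            interval_regret n k l w r s
              \<le> C * (sqrt (2 * L * (real (n - k) * ln (real n * (1 + real (n - k) * real T)) + 1))
                     + (real (n - k) * ln (real n * (1 + real (n - k) * real T)) + 1)))"
  apply (rule exI[of _ 3])
  apply (intro allI impI)
  apply (elim conjE)
  apply (rule main)
                apply assumption+
  done

end
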